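(* Let $G=(V,E)$ be a planar graph with a fixed planar embedding, let $c,\delta,\varepsilon\in(0,1)$, let $k\ge1$ be an integer, and let $\ell\ge 2k^2+2k\delta^{-1}+2\varepsilon^{-1}-1$ be an integer. Then for any $c$-maximum independent sets $S_1,\dots,S_k$ of $G$ there exists $p\in\{0,\dots,\ell\}$ such that simultaneously (i) $|S_h\cap L^p|\le(\delta/2)|S_h|$ for all $h\in[k]$; (ii) $\sum_{i\ne j}|(S_i\cap L^p)\Delta(S_j\cap L^p)|\le(\varepsilon/2)\sum_{i\ne j}|S_i\Delta S_j|$; and (iii) $|(S_i\cap L^p)\Delta(S_j\cap L^p)|\le\frac12|S_i\Delta S_j|$ for every $i\ne j$. Consequently, if moreover $|S_i\Delta S_j|\ge 2$ for all $i\ne j$, then the sets $S_i\setminus L^p$, $i\in[k]$, are pairwise distinct.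
   Context: Levels of vertices of an embedded planar graph: a vertex is at level 1 if it lies on the exterior face; inductively, vertices on the exterior face of the graph obtained after deleting all vertices of levels $1,\dots,i-1$ are at level $i$. For an integer $\ell\ge 0$ and $p\in\{0,\dots,\ell\}$, the $p$-th stratum $L^p$ is the set of vertices whose level is congruent to $p$ modulo $\ell+1$. A $c$-maximum independent set is an independent set $S$ with $|S|\ge c$ times the maximum size of an independent set of $G$. *)

theory Defs
  imports "HOL-Analysis.Analysis"
begin

definition simple_graph :: "'v set \<Rightarrow> 'v set set \<Rightarrow> bool" where
  "simple_graph V E \<longleftrightarrow> finite V \<and> (\<forall>e\<in>E. e \<subseteq> V \<and> card e = 2)"

definition indep_set :: "'v set \<Rightarrow> 'v set set \<Rightarrow> 'v set \<Rightarrow> bool" where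
  "indep_set V E S \<longleftrightarrow> S \<subseteq> V \<and> (\<forall>e\<in>E. \<not> e \<subseteq> S)"

definition max_indep_size :: "'v set \<Rightarrow> 'v set set \<Rightarrow> nat" where
  "max_indep_size V E = Max (card ` {S. indep_set V E S})"

definition c_max_indep :: "'v set \<Rightarrow> 'v set set \<Rightarrow> real \<Rightarrow> 'v set \<Rightarrow> bool" where
  "c_max_indep V E c S \<longleftrightarrow> indep_set V E S \<and> real (card S) \<ge> c * real (max_indep_size V E)"

definition plane_embedding ::
  "'v set \<Rightarrow> 'v set set \<Rightarrow> ('v \<Rightarrow> complex) \<Rightarrow> ('v set \<Rightarrow> real \<Rightarrow> complex) \<Rightarrow> bool" where
  "plane_embedding V E pos \<gamma> \<longleftrightarrow>
     inj_on pos V \<and>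
     (\<forall>e\<in>E. arc (\<gamma> e) \<and> {pathstart (\<gamma> e), pathfinish (\<gamma> e)} = pos ` e \<and>
             path_image (\<gamma> e) \<inter> pos ` V = pos ` e) \<and>
     (\<forall>e\<in>E. \<forall>f\<in>E. e \<noteq> f \<longrightarrow> path_image (\<gamma> e) \<inter> path_image (\<gamma> f) \<subseteq> pos ` (e \<inter> f))"

definition drawing ::
  "'v set set \<Rightarrow> ('v \<Rightarrow> complex) \<Rightarrow> ('v set \<Rightarrow> real \<Rightarrow> complex) \<Rightarrow> 'v set \<Rightarrow> complex set" where
  "drawing E pos \<gamma> W = pos ` W \<union> (\<Union>e\<in>{e\<in>E. e \<subseteq> W}. path_image (\<gamma> e))"

definition outer_face ::
  "'v set set \<Rightarrow> ('v \<Rightarrow> complex) \<Rightarrow> ('v set \<Rightarrow> real \<Rightarrow> complex) \<Rightarrow> 'v set \<Rightarrow> complex set" where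
  "outer_face E pos \<gamma> W =
     {x. x \<notin> drawing E pos \<gamma> W \<and> \<not> bounded (connected_component_set (- drawing E pos \<gamma> W) x)}"

definition on_outer ::
  "'v set set \<Rightarrow> ('v \<Rightarrow> complex) \<Rightarrow> ('v set \<Rightarrow> real \<Rightarrow> complex) \<Rightarrow> 'v set \<Rightarrow> 'v set" where
  "on_outer E pos \<gamma> W = {v\<in>W. pos v \<in> closure (outer_face E pos \<gamma> W)}"

text \<open>remaining i = vertices of level > i.\<close>
primrec remaining ::
  "'v set \<Rightarrow> 'v set set \<Rightarrow> ('v \<Rightarrow> complex) \<Rightarrow> ('v set \<Rightarrow> real \<Rightarrow> complex) \<Rightarrow> nat \<Rightarrow> 'v set" where
  "remaining V E pos \<gamma> 0 = V"
| "remaining V E pos \<gamma> (Suc i) =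
     remaining V E pos \<gamma> i - on_outer E pos \<gamma> (remaining V E pos \<gamma> i)"

definition level_set ::
  "'v set \<Rightarrow> 'v set set \<Rightarrow> ('v \<Rightarrow> complex) \<Rightarrow> ('v set \<Rightarrow> real \<Rightarrow> complex) \<Rightarrow> nat \<Rightarrow> 'v set" where
  "level_set V E pos \<gamma> j =
     (if j = 0 then {} else on_outer E pos \<gamma> (remaining V E pos \<gamma> (j - 1)))"

definition stratum ::
  "'v set \<Rightarrow> 'v set set \<Rightarrow> ('v \<Rightarrow> complex) \<Rightarrow> ('v set \<Rightarrow> real \<Rightarrow> complex) \<Rightarrow> nat \<Rightarrow> nat \<Rightarrow> 'v set" where
  "stratum V E pos \<gamma> l p = {v. \<exists>j\<ge>1. v \<in> level_set V E pos \<gamma> j \<and> j mod (l + 1) = p}"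

definition symdiff :: "'a set \<Rightarrow> 'a set \<Rightarrow> 'a set" where
  "symdiff A B = (A - B) \<union> (B - A)"

end

theory Submission
  imports Defs
begin

lemma remaining_anti:
  "i \<le> j \<Longrightarrow> remaining V E pos \<gamma> j \<subseteq> remaining V E pos \<gamma> i"
  by (induction rule: dec_induct) auto

lemma level_unique:
  assumes "v \<in> level_set V E pos \<gamma> j" "v \<in> level_set V E pos \<gamma> j'" "j \<ge> 1" "j' \<ge> 1"
  shows "j = j'"
proof (rule ccontr)
  have gen: False if "v \<in> level_set V E pos \<gamma> a" "v \<in> level_set V E pos \<gamma> b" "1 \<le> a" "a < b" for a b
  proof -
    obtain m where m: "a = Suc m" using \<open>1 \<le> a\<close> by (cases a) auto
    have "v \<in> remaining V E pos \<gamma> (b - 1)"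
      using that(2,3,4) by (auto simp: level_set_def on_outer_def)
    moreover have "remaining V E pos \<gamma> (b - 1) \<subseteq> remaining V E pos \<gamma> a"
      using that by (intro remaining_anti) auto
    ultimately have "v \<in> remaining V E pos \<gamma> (Suc m)" using m by auto
    moreover have "v \<in> on_outer E pos \<gamma> (remaining V E pos \<gamma> m)"
      using that(1) m by (auto simp: level_set_def)
    ultimately show False by simp
  qed
  assume "j \<noteq> j'"
  then show False
    using gen[of j j'] gen[of j' j] assms by (cases "j < j'") auto
qed

lemma stratum_disj:
  assumes "p \<le> l" "q \<le> l" "p \<noteq> q"
  shows "stratum V E pos \<gamma> l p \<inter> stratum V E pos \<gamma> l q = {}"
proof -
  { fix v assume "v \<in> stratum V E pos \<gamma> l p" "v \<in> stratum V E pos \<gamma> l q"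
    then obtain j j' where "j \<ge> 1" "v \<in> level_set V E pos \<gamma> j" "j mod (l+1) = p"
       "j' \<ge> 1" "v \<in> level_set V E pos \<gamma> j'" "j' mod (l+1) = q"
      unfolding stratum_def by blast
    then have False using level_unique[of v V E pos \<gamma> j j'] assms by auto }
  then show ?thesis by blast
qed

lemma sum_card_le:
  fixes L :: "nat \<Rightarrow> 'a set"
  assumes "finite A" and disj: "\<forall>p\<in>{0..l}. \<forall>q\<in>{0..l}. p \<noteq> q \<longrightarrow> L p \<inter> L q = {}"
  shows "(\<Sum>p\<in>{0..l}. real (card (A \<inter> L p))) \<le> real (card A)"
proof -
  have "(\<Sum>p\<in>{0..l}. card (A \<inter> L p)) = card (\<Union>p\<in>{0..l}. A \<inter> L p)"
    using assms by (subst card_UN_disjoint) auto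
  also have "\<dots> \<le> card A" using assms by (intro card_mono) auto
  finally have "(\<Sum>p\<in>{0..l}. card (A \<inter> L p)) \<le> card A" .
  then show ?thesis by (metis of_nat_le_iff of_nat_sum)
qed

lemma scaled:
  fixes x :: "nat \<Rightarrow> real"
  assumes "0 \<le> s" "(\<Sum>p\<in>P. x p) \<le> N" "0 \<le> N"
  shows "(\<Sum>p\<in>P. s / N * x p) \<le> s"
proof (cases "N = 0")
  case True then show ?thesis using assms by simp
next
  case False
  then have "N > 0" using assms by simp
  have "(\<Sum>p\<in>P. s / N * x p) = s / N * (\<Sum>p\<in>P. x p)" by (simp add: sum_distrib_left)
  also have "\<dots> \<le> s / N * N" using assms \<open>N > 0\<close> by (intro mult_left_mono) auto
  also have "\<dots> = s" using \<open>N > 0\<close> by simp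
  finally show ?thesis .
qed

lemma unscale:
  fixes x N t :: real
  assumes "2 / (t * N) * x \<le> 1" "0 < t" "0 \<le> x" "x \<le> N"
  shows "x \<le> t / 2 * N"
proof (cases "N = 0")
  case True then show ?thesis using assms by simp
next
  case False
  then have "N > 0" using assms by simp
  then show ?thesis using assms by (simp add: field_simps)
qed

lemma avg_pick:
  fixes g :: "nat \<Rightarrow> real"
  assumes "(\<Sum>p\<in>{0..l}. g p) \<le> real l"
  shows "\<exists>p\<in>{0..l}. g p \<le> 1"
proof (rule ccontr)
  assume "\<not> ?thesis"
  then have "\<forall>p\<in>{0..l}. 1 < g p" by auto
  then have "(\<Sum>p\<in>{0..l}. (1::real)) < (\<Sum>p\<in>{0..l}. g p)"
    by (intro sum_strict_mono) auto
  then show False using assms by simp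
qed

lemma symdiff_Int: "symdiff (A \<inter> L) (B \<inter> L) = symdiff A B \<inter> L"
  by (auto simp: symdiff_def)
theorem mainTheorem5:
  fixes V :: "'v set" and E :: "'v set set"
    and pos :: "'v \<Rightarrow> complex" and \<gamma> :: "'v set \<Rightarrow> real \<Rightarrow> complex"
    and c \<delta> \<epsilon> :: real and k l :: nat and S :: "nat \<Rightarrow> 'v set"
  assumes G: "simple_graph V E"
    and emb: "plane_embedding V E pos \<gamma>"
    and c: "0 < c" "c < 1" and \<delta>: "0 < \<delta>" "\<delta> < 1" and \<epsilon>: "0 < \<epsilon>" "\<epsilon> < 1"
    and k: "k \<ge> 1"
    and l: "real l \<ge> 2 * real k ^ 2 + 2 * real k / \<delta> + 2 / \<epsilon> - 1"
    and S: "\<forall>h\<in>{1..k}. c_max_indep V E c (S h)"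
  shows "\<exists>p\<in>{0..l}.
    (\<forall>h\<in>{1..k}. real (card (S h \<inter> stratum V E pos \<gamma> l p)) \<le> (\<delta> / 2) * real (card (S h))) \<and>
    (\<Sum>i\<in>{1..k}. \<Sum>j\<in>{1..k} - {i}.
        real (card (symdiff (S i \<inter> stratum V E pos \<gamma> l p) (S j \<inter> stratum V E pos \<gamma> l p))))
      \<le> (\<epsilon> / 2) * (\<Sum>i\<in>{1..k}. \<Sum>j\<in>{1..k} - {i}. real (card (symdiff (S i) (S j)))) \<and>
    (\<forall>i\<in>{1..k}. \<forall>j\<in>{1..k}. i \<noteq> j \<longrightarrow>
        real (card (symdiff (S i \<inter> stratum V E pos \<gamma> l p) (S j \<inter> stratum V E pos \<gamma> l p)))
          \<le> (1 / 2) * real (card (symdiff (S i) (S j)))) \<and>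
    ((\<forall>i\<in>{1..k}. \<forall>j\<in>{1..k}. i \<noteq> j \<longrightarrow> card (symdiff (S i) (S j)) \<ge> 2) \<longrightarrow>
       (\<forall>i\<in>{1..k}. \<forall>j\<in>{1..k}. i \<noteq> j \<longrightarrow>
          S i - stratum V E pos \<gamma> l p \<noteq> S j - stratum V E pos \<gamma> l p))"
proof -
  define L where "L = stratum V E pos \<gamma> l"
  have disj: "\<forall>p\<in>{0..l}. \<forall>q\<in>{0..l}. p \<noteq> q \<longrightarrow> L p \<inter> L q = {}"
    unfolding L_def using stratum_disj by (metis atLeastAtMost_iff)
  have finV: "finite V" using G by (simp add: simple_graph_def)
  have finS: "\<And>h. h \<in> {1..k} \<Longrightarrow> finite (S h)"
    using S finV by (meson c_max_indep_def indep_set_def rev_finite_subset)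
  define N where "N h = real (card (S h))" for h
  define X where "X h p = real (card (S h \<inter> L p))" for h p
  define D where "D i j = real (card (symdiff (S i) (S j)))" for i j
  define Z where "Z i j p = real (card (symdiff (S i \<inter> L p) (S j \<inter> L p)))" for i j p
  define T where "T = (\<Sum>i\<in>{1..k}. \<Sum>j\<in>{1..k} - {i}. D i j)"
  define Y where "Y p = (\<Sum>i\<in>{1..k}. \<Sum>j\<in>{1..k} - {i}. Z i j p)" for p
  have finSD: "finite (symdiff (S i) (S j))" if "i \<in> {1..k}" "j \<in> {1..k}" for i j
    using finS that by (simp add: symdiff_def)
  have ZD: "Z i j p \<le> D i j" if "i \<in> {1..k}" "j \<in> {1..k}" for i j p
    unfolding Z_def D_def symdiff_Int using finSD[OF that] by (simp add: card_mono)
  have XN: "X h p \<le> N h" if "h \<in> {1..k}" for h p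
    unfolding X_def N_def using finS[OF that] by (simp add: card_mono)
  have sumX: "(\<Sum>p\<in>{0..l}. X h p) \<le> N h" if "h \<in> {1..k}" for h
    unfolding X_def N_def by (rule sum_card_le[OF finS[OF that] disj])
  have sumZ: "(\<Sum>p\<in>{0..l}. Z i j p) \<le> D i j" if "i \<in> {1..k}" "j \<in> {1..k}" for i j
    unfolding Z_def D_def symdiff_Int by (rule sum_card_le[OF finSD[OF that] disj])
  have sumY: "(\<Sum>p\<in>{0..l}. Y p) \<le> T"
  proof -
    have "(\<Sum>p\<in>{0..l}. Y p) = (\<Sum>i\<in>{1..k}. \<Sum>j\<in>{1..k} - {i}. \<Sum>p\<in>{0..l}. Z i j p)"
      unfolding Y_def by (subst sum.swap) (simp add: sum.swap[of _ "{0..l}"])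
    also have "\<dots> \<le> T" unfolding T_def
      by (intro sum_mono) (use sumZ in auto)
    finally show ?thesis .
  qed
  have Dnn: "0 \<le> D i j" for i j by (simp add: D_def)
  have T0: "0 \<le> T" unfolding T_def by (intro sum_nonneg) (simp add: Dnn)
  define a where "a h p = 2 / (\<delta> * N h) * X h p" for h p
  define b where "b p = 2 / (\<epsilon> * T) * Y p" for p
  define cc where "cc i j p = 2 / (1 * D i j) * Z i j p" for i j p
  define \<Phi> where "\<Phi> p = (\<Sum>h\<in>{1..k}. a h p) + b p + (\<Sum>i\<in>{1..k}. \<Sum>j\<in>{1..k} - {i}. cc i j p)" for p
  have sa: "(\<Sum>p\<in>{0..l}. a h p) \<le> 2 / \<delta>" if "h \<in> {1..k}" for h
  proof -
    have "(\<Sum>p\<in>{0..l}. a h p) = (\<Sum>p\<in>{0..l}. (2/\<delta>) / N h * X h p)"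
      unfolding a_def by simp
    also have "\<dots> \<le> 2 / \<delta>" using sumX[OF that] \<delta> by (intro scaled) (auto simp: N_def)
    finally show ?thesis .
  qed
  have sb: "(\<Sum>p\<in>{0..l}. b p) \<le> 2 / \<epsilon>"
  proof -
    have "(\<Sum>p\<in>{0..l}. b p) = (\<Sum>p\<in>{0..l}. (2/\<epsilon>) / T * Y p)"
      unfolding b_def by simp
    also have "\<dots> \<le> 2 / \<epsilon>" using sumY \<epsilon> T0 by (intro scaled) auto
    finally show ?thesis .
  qed
  have sc: "(\<Sum>p\<in>{0..l}. cc i j p) \<le> 2" if "i \<in> {1..k}" "j \<in> {1..k}" for i j
  proof -
    have "(\<Sum>p\<in>{0..l}. cc i j p) = (\<Sum>p\<in>{0..l}. 2 / D i j * Z i j p)"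
      unfolding cc_def by simp
    also have "\<dots> \<le> 2" using sumZ[OF that] Dnn by (intro scaled) auto
    finally show ?thesis .
  qed
  have "(\<Sum>p\<in>{0..l}. \<Phi> p) = (\<Sum>h\<in>{1..k}. \<Sum>p\<in>{0..l}. a h p) + (\<Sum>p\<in>{0..l}. b p)
      + (\<Sum>i\<in>{1..k}. \<Sum>j\<in>{1..k} - {i}. \<Sum>p\<in>{0..l}. cc i j p)"
    unfolding \<Phi>_def sum.distrib
    by (simp add: sum.swap[of _ "{0..l}"])
  also have "\<dots> \<le> (\<Sum>h\<in>{1..k}. 2 / \<delta>) + 2 / \<epsilon> + (\<Sum>i\<in>{1..k}. \<Sum>j\<in>{1..k} - {i}. 2)"
    using sa sb sc by (intro add_mono sum_mono) auto
  also have "\<dots> = real k * (2 / \<delta>) + 2 / \<epsilon> + real k * (real k - 1) * 2"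
    using k by (simp add: of_nat_diff)
  also have "\<dots> \<le> real l" using l k by (simp add: power2_eq_square algebra_simps)
  finally obtain p where p: "p \<in> {0..l}" "\<Phi> p \<le> 1" using avg_pick by blast
  have ann: "0 \<le> a h p" for h using \<delta> by (simp add: a_def N_def X_def)
  have Ynn: "0 \<le> Y p" unfolding Y_def Z_def by (intro sum_nonneg) simp
  have bnn: "0 \<le> b p" using \<epsilon> T0 Ynn unfolding b_def by simp
  have cnn: "0 \<le> cc i j p" for i j using Dnn by (simp add: cc_def Z_def)
  have A: "(\<Sum>h\<in>{1..k}. a h p) \<le> 1" and B: "b p \<le> 1"
    and C: "(\<Sum>i\<in>{1..k}. \<Sum>j\<in>{1..k} - {i}. cc i j p) \<le> 1"
    using p(2) ann bnn cnn unfolding \<Phi>_def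
    by (smt (verit) sum_nonneg)+
  have i1: "\<forall>h\<in>{1..k}. X h p \<le> \<delta> / 2 * N h"
  proof
    fix h assume h: "h \<in> {1..k}"
    have "a h p \<le> 1" using A ann member_le_sum[of h "{1..k}" "\<lambda>h. a h p"] h by force
    then show "X h p \<le> \<delta> / 2 * N h" using \<delta> XN[OF h]
      by (intro unscale) (auto simp: a_def X_def)
  qed
  have YT: "Y p \<le> T" unfolding Y_def T_def by (intro sum_mono) (use ZD in auto)
  have i2: "Y p \<le> \<epsilon> / 2 * T"
    using B \<epsilon> YT Ynn unfolding b_def by (intro unscale) auto
  have i3: "\<forall>i\<in>{1..k}. \<forall>j\<in>{1..k}. i \<noteq> j \<longrightarrow> Z i j p \<le> 1 / 2 * D i j"
  proof (intro ballI impI)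
    fix i j assume ij: "i \<in> {1..k}" "j \<in> {1..k}" "i \<noteq> j"
    have "(\<Sum>j\<in>{1..k} - {i}. cc i j p) \<le> 1"
    proof -
      have "(\<Sum>j\<in>{1..k} - {i}. cc i j p) \<le> (\<Sum>i\<in>{1..k}. \<Sum>j\<in>{1..k} - {i}. cc i j p)"
        by (rule member_le_sum) (use ij cnn in \<open>auto intro: sum_nonneg\<close>)
      then show ?thesis using C by linarith
    qed
    then have "cc i j p \<le> 1"
      using member_le_sum[of j "{1..k} - {i}" "\<lambda>j. cc i j p"] ij cnn by force
    then show "Z i j p \<le> 1 / 2 * D i j" using ZD[OF ij(1,2)]
      by (intro unscale) (auto simp: cc_def Z_def)
  qed
  have i4: "S i - L p \<noteq> S j - L p"
    if ij: "i \<in> {1..k}" "j \<in> {1..k}" "i \<noteq> j" and two: "card (symdiff (S i) (S j)) \<ge> 2" for i j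
  proof
    assume eq: "S i - L p = S j - L p"
    then have "symdiff (S i) (S j) \<inter> L p = symdiff (S i) (S j)"
      unfolding symdiff_def by blast
    then have "D i j = Z i j p" unfolding D_def Z_def symdiff_Int by simp
    moreover have "Z i j p \<le> 1 / 2 * D i j" using i3 ij by blast
    moreover have "D i j \<ge> 2" using two by (simp add: D_def)
    ultimately show False by simp
  qed
  show ?thesis
    apply (rule bexI[OF _ p(1)])
    using i1 i2 i3 i4
    unfolding L_def[symmetric] X_def N_def Y_def T_def Z_def D_def
    by blast
qed

end
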